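(* Let $F$ be the joint distribution function of $(X_1,\dots,X_{n_s})$. For every $s>0$, $F^{1/s}$ is again a distribution function on $(0,\infty)^{n_s}$; specifically, $F^{1/s}$ is the joint distribution function of the same model with tilting parameters $\theta_k/s^{1/\alpha}$ in place of $\theta_k$ and weights $\omega_{kj}/s$ in place of $\omega_{kj}$ (all other parameters unchanged). Consequently $(X_1,\dots,X_{n_s})$ is max-infinitely divisible.
   Context: Standing model. Fix $\alpha\in(0,1)$, $\alpha_0>0$, $\tau>0$, an integer $K\ge1$ and tilting parameters $\theta_1,\dots,\theta_K\ge0$. Fix locations $\boldsymbol s_1,\dots,\boldsymbol s_{n_s}$ and nonnegative weights $\omega_{kj}$ with $\{k:\omega_{kj}\ne0\}\neq\emptyset$ for every $j$. Let $Z_1,\dots,Z_K$ be independent positive random variables with $E[e^{-sZ_k}]=\exp[-\{(\theta_k+s)^\alpha-\theta_k^\alpha\}]$, $s\ge0$. Let $\epsilon_1,\dots,\epsilon_{n_s}$ be i.i.d., independent of the $Z_k$, with $\Pr(\epsilon_j\le x)=\exp\{-(x/\tau)^{-1/\alpha_0}\}$, $x>0$. Define $X_j=\epsilon_j\big(\sum_{k=1}^K\omega_{kj}^{1/\alpha}Z_k\big)^{\alpha_0}$. A random vector with distribution function $F$ is max-infinitely divisible if $F^{1/m}$ is a distribution function for every integer $m\ge1$. *)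

theory Defs
  imports "HOL-Probability.Probability"
begin

text \<open>Indices are 0-based: k ranges over {..<K}, j over {..<ns}.\<close>

definition Xvar :: "real \<Rightarrow> real \<Rightarrow> nat \<Rightarrow> (nat \<Rightarrow> nat \<Rightarrow> real)
    \<Rightarrow> (nat \<Rightarrow> 'a \<Rightarrow> real) \<Rightarrow> (nat \<Rightarrow> 'a \<Rightarrow> real) \<Rightarrow> nat \<Rightarrow> 'a \<Rightarrow> real" where
  "Xvar \<alpha> \<alpha>0 K \<omega> Z eps j w =
     eps j w * (\<Sum>k<K. \<omega> k j powr (1 / \<alpha>) * Z k w) powr \<alpha>0"

definition model :: "'a measure \<Rightarrow> real \<Rightarrow> real \<Rightarrow> real \<Rightarrow> nat \<Rightarrow> (nat \<Rightarrow> real)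
    \<Rightarrow> nat \<Rightarrow> (nat \<Rightarrow> nat \<Rightarrow> real) \<Rightarrow> (nat \<Rightarrow> 'a \<Rightarrow> real) \<Rightarrow> (nat \<Rightarrow> 'a \<Rightarrow> real) \<Rightarrow> bool" where
  "model M \<alpha> \<alpha>0 \<tau> K \<theta> ns \<omega> Z eps \<longleftrightarrow>
     prob_space M \<and>
     (\<forall>k<K. Z k \<in> borel_measurable M) \<and>
     (\<forall>j<ns. eps j \<in> borel_measurable M) \<and>
     prob_space.indep_vars M (\<lambda>_. borel)
        (\<lambda>i. case i of Inl k \<Rightarrow> Z k | Inr j \<Rightarrow> eps j) ({..<K} <+> {..<ns}) \<and>
     (\<forall>k<K. (AE w in M. Z k w > 0)) \<and>
     (\<forall>k<K. \<forall>t\<ge>0. integral\<^sup>L M (\<lambda>w. exp (- t * Z k w))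
                    = exp (- ((\<theta> k + t) powr \<alpha> - \<theta> k powr \<alpha>))) \<and>
     (\<forall>j<ns. \<forall>x>0. measure M {w \<in> space M. eps j w \<le> x}
                    = exp (- ((x / \<tau>) powr (- 1 / \<alpha>0))))"

definition joint_cdf :: "'a measure \<Rightarrow> (nat \<Rightarrow> 'a \<Rightarrow> real) \<Rightarrow> nat \<Rightarrow> (nat \<Rightarrow> real) \<Rightarrow> real" where
  "joint_cdf M Y n x = measure M {w \<in> space M. \<forall>j<n. Y j w \<le> x j}"

definition is_joint_cdf :: "nat \<Rightarrow> ((nat \<Rightarrow> real) \<Rightarrow> real) \<Rightarrow> bool" where
  "is_joint_cdf n G \<longleftrightarrow>
     (\<exists>(N :: (nat \<Rightarrow> real) measure) Y. prob_space N \<and> (\<forall>j<n. Y j \<in> borel_measurable N) \<and>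
        (\<forall>x. G x = joint_cdf N Y n x))"

definition max_inf_div :: "nat \<Rightarrow> ((nat \<Rightarrow> real) \<Rightarrow> real) \<Rightarrow> bool" where
  "max_inf_div n G \<longleftrightarrow> (\<forall>m::nat. m \<ge> 1 \<longrightarrow> is_joint_cdf n (\<lambda>x. G x powr (1 / real m)))"

end

theory Submission
  imports Defs "HOL-Complex_Analysis.Complex_Analysis"
begin

lemma powser_ext:
  fixes a :: "nat \<Rightarrow> real" and c R T \<alpha> u :: real
  assumes T: "0 < T" "T < R"
    and sumsT: "\<And>u. 0 \<le> u \<Longrightarrow> u \<le> T \<Longrightarrow> (\<lambda>n. a n * u^n) sums exp (c - (R - u) powr \<alpha>)"
    and u: "0 \<le> u" "u < R"
  shows "(\<lambda>n. a n * u^n) sums exp (c - (R - u) powr \<alpha>)"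
proof -
  define G where "G = (\<lambda>z::complex. exp (of_real c - (of_real R - z) powr of_real \<alpha>))"
  define A where "A = Abs_fps (\<lambda>n. complex_of_real (a n))"
  have hol: "G holomorphic_on ball 0 R"
    unfolding G_def
  proof (intro holomorphic_intros)
    fix z :: complex assume z: "z \<in> ball 0 R"
    have "Re z < R" using z complex_Re_le_cmod[of z] by (auto simp: dist_norm)
    then show "of_real R - z \<notin> \<real>\<^sub>\<le>\<^sub>0" by (auto simp: complex_nonpos_Reals_iff)
  qed
  have Greal: "G (of_real v) = of_real (exp (c - (R - v) powr \<alpha>))" if "v < R" for v
  proof -
    have "G (of_real v) = exp (of_real c - of_real ((R - v) powr \<alpha>))"
      unfolding G_def using that by (simp flip: of_real_diff add: powr_of_real)
    also have "\<dots> = of_real (exp (c - (R - v) powr \<alpha>))"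
      by (simp flip: of_real_diff exp_of_real)
    finally show ?thesis .
  qed
  have sumsC: "(\<lambda>n. fps_nth A n * (of_real v) ^ n) sums G (of_real v)" if "0 \<le> v" "v \<le> T" for v
  proof -
    have "(\<lambda>n. complex_of_real (a n * v^n)) sums of_real (exp (c - (R - v) powr \<alpha>))"
      using sumsT[OF that] by (simp only: sums_of_real_iff)
    then show ?thesis using Greal[of v] that T by (simp add: A_def)
  qed
  have rad: "fps_conv_radius A \<ge> T"
  proof -
    have "summable (\<lambda>n. fps_nth A n * (of_real T) ^ n)"
      using sumsC[of T] T by (auto simp: sums_iff)
    from conv_radius_geI[OF this] show ?thesis using T by (simp add: fps_conv_radius_def)
  qed
  have eq_ball: "eval_fps A z = G z" if z: "z \<in> ball 0 T" for z
  proof -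
    have "(\<lambda>z. eval_fps A z - G z) z = 0"
    proof (rule analytic_continuation[where f = "\<lambda>z. eval_fps A z - G z" and S = "ball 0 T" and U = "of_real ` {0<..<T}" and \<xi> = 0])
      have "z \<in> eball 0 (fps_conv_radius A)" if "z \<in> ball (0::complex) T" for z
      proof -
        have "ereal (dist 0 z) < ereal T" using that by auto
        then show ?thesis using less_le_trans[OF _ rad] by simp
      qed
      hence "ball (0::complex) T \<subseteq> eball 0 (fps_conv_radius A)" by blast
      moreover have "ball 0 T \<subseteq> ball (0::complex) R" using T by auto
      ultimately show "(\<lambda>z. eval_fps A z - G z) holomorphic_on ball 0 T"
        by (intro holomorphic_intros holomorphic_on_subset[OF hol]) auto
      show "open (ball (0::complex) T)" "connected (ball (0::complex) T)" by auto
      show "of_real ` {0<..<T} \<subseteq> ball (0::complex) T" by auto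
      show "(0::complex) \<in> ball 0 T" using T by auto
      show "z \<in> ball 0 T" by fact
      show "(0::complex) islimpt of_real ` {0<..<T}"
      proof (rule islimpt_approachable[THEN iffD2], intro allI impI)
        fix e :: real assume e: "e > 0"
        show "\<exists>x'\<in>complex_of_real ` {0<..<T}. x' \<noteq> 0 \<and> dist x' 0 < e"
          using e T by (intro bexI[of _ "of_real (min (T/2) (e/2))"]) auto
      qed
      fix w assume "w \<in> complex_of_real ` {0<..<T}"
      then obtain v where v: "w = of_real v" "0 < v" "v < T" by auto
      have "eval_fps A w = G w"
        using sumsC[of v] v by (auto simp: eval_fps_def sums_iff)
      then show "eval_fps A w - G w = 0" by simp
    qed
    then show ?thesis by simp
  qed
  have exp: "G has_fps_expansion A"
    unfolding has_fps_expansion_def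
  proof
    show "0 < fps_conv_radius A" using rad T by (meson ereal_less(2) less_le_trans)
    have "eventually (\<lambda>z. z \<in> ball (0::complex) T) (nhds 0)"
      using T by (intro eventually_nhds_in_open) auto
    then show "\<forall>\<^sub>F z in nhds 0. eval_fps A z = G z"
      by eventually_elim (use eq_ball in auto)
  qed
  have "(\<lambda>n. (deriv ^^ n) G 0 / fact n * (of_real u - 0)^n) sums G (of_real u)"
    using u by (intro holomorphic_power_series[OF hol]) auto
  then have "(\<lambda>n. complex_of_real (a n * u^n)) sums of_real (exp (c - (R - u) powr \<alpha>))"
    using fps_nth_fps_expansion[OF exp] Greal[of u] u by (simp add: A_def)
  then show ?thesis by (simp only: sums_of_real_iff)
qed

lemma pow_fact_exp_bound:
  fixes z :: real assumes "0 \<le> z"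
  shows "z ^ n * exp (- z) \<le> fact n"
proof -
  have "z ^ n / fact n = (\<lambda>k. z^k /\<^sub>R fact k) n" by (simp add: divide_inverse_commute)
  also have "\<dots> \<le> (\<Sum>k<Suc n. z^k /\<^sub>R fact k)" using assms
    by (intro member_le_sum) auto
  also have "\<dots> \<le> exp z"
    using sum_le_suminf[OF sums_summable[OF exp_converges[of z]], of "{..<Suc n}"] assms
      sums_unique[OF exp_converges[of z]] by auto
  finally have "z ^ n \<le> fact n * exp z" by (simp add: field_simps)
  then show ?thesis by (simp add: exp_minus field_simps)
qed

lemma laplace_ext:
  fixes M :: "'a measure" and Z :: "'a \<Rightarrow> real" and \<theta> \<alpha> \<mu> :: real
  assumes M: "prob_space M" and Zm: "Z \<in> borel_measurable M" and Zpos: "AE w in M. Z w > 0"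
    and th: "\<theta> \<ge> 0"
    and lap: "\<forall>t\<ge>0. integral\<^sup>L M (\<lambda>w. exp (- t * Z w)) = exp (- ((\<theta> + t) powr \<alpha> - \<theta> powr \<alpha>))"
    and mu: "\<mu> < \<theta> \<or> \<mu> \<le> 0"
  shows "integrable M (\<lambda>w. exp (\<mu> * Z w)) \<and>
         integral\<^sup>L M (\<lambda>w. exp (\<mu> * Z w)) = exp (\<theta> powr \<alpha> - (\<theta> - \<mu>) powr \<alpha>)"
proof -
  interpret prob_space M by fact
  have Zm'[measurable]: "Z \<in> borel_measurable M" by fact
  have nn_lap: "(\<integral>\<^sup>+w. ennreal (exp (- t * Z w)) \<partial>M) = ennreal (exp (\<theta> powr \<alpha> - (\<theta> + t) powr \<alpha>))"
    if t: "t \<ge> 0" for t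
  proof -
    have int: "integrable M (\<lambda>w. exp (- t * Z w))"
    proof (rule integrable_const_bound[where B=1])
      show "AE x in M. norm (exp (- t * Z x)) \<le> 1"
        using Zpos by eventually_elim (use t in \<open>auto simp: mult_nonneg_nonneg\<close>)
    qed simp
    have "(\<integral>\<^sup>+w. ennreal (exp (- t * Z w)) \<partial>M) = ennreal (integral\<^sup>L M (\<lambda>w. exp (- t * Z w)))"
      by (rule nn_integral_eq_integral[OF int]) auto
    also have "\<dots> = ennreal (exp (\<theta> powr \<alpha> - (\<theta> + t) powr \<alpha>))"
      using lap t by simp
    finally show ?thesis .
  qed
  have main: "(\<integral>\<^sup>+w. ennreal (exp (\<mu> * Z w)) \<partial>M) = ennreal (exp (\<theta> powr \<alpha> - (\<theta> - \<mu>) powr \<alpha>))"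
  proof (cases "\<mu> \<le> 0")
    case True
    then show ?thesis using nn_lap[of "-\<mu>"] by simp
  next
    case False
    with mu have mu': "0 < \<mu>" "\<mu> < \<theta>" by auto
    define a where "a n = integral\<^sup>L M (\<lambda>w. Z w ^ n * exp (- Z w)) / fact n" for n
    have intn: "integrable M (\<lambda>w. Z w ^ n * exp (- Z w))" for n
    proof (rule integrable_const_bound[where B="fact n"])
      show "AE x in M. norm (Z x ^ n * exp (- Z x)) \<le> fact n"
        using Zpos by eventually_elim (auto simp: abs_mult intro!: pow_fact_exp_bound)
    qed simp
    have a_nn: "a n \<ge> 0" for n
      unfolding a_def
      by (intro divide_nonneg_pos integral_nonneg_AE) (use Zpos in \<open>auto elim!: eventually_mono\<close>)
    have series: "(\<integral>\<^sup>+w. ennreal (exp ((u - 1) * Z w)) \<partial>M) = (\<Sum>n. ennreal (a n * u ^ n))"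
      if u: "u \<ge> 0" for u
    proof -
      have "(\<integral>\<^sup>+w. ennreal (exp ((u - 1) * Z w)) \<partial>M)
           = (\<integral>\<^sup>+w. (\<Sum>n. ennreal (u ^ n / fact n * (Z w ^ n * exp (- Z w)))) \<partial>M)"
      proof (rule nn_integral_cong_AE)
        show "AE w in M. ennreal (exp ((u - 1) * Z w)) = (\<Sum>n. ennreal (u ^ n / fact n * (Z w ^ n * exp (- Z w))))"
          using Zpos
        proof eventually_elim
          case (elim w)
          have s: "(\<lambda>n. (u * Z w) ^ n /\<^sub>R fact n * exp (- Z w)) sums (exp (u * Z w) * exp (- Z w))"
            by (intro sums_mult2 exp_converges)
          have eq: "(\<lambda>n. (u * Z w) ^ n /\<^sub>R fact n * exp (- Z w)) = (\<lambda>n. u ^ n / fact n * (Z w ^ n * exp (- Z w)))"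
            by (auto simp: power_mult_distrib field_simps)
          have "exp ((u - 1) * Z w) = exp (u * Z w) * exp (- Z w)"
            by (simp add: left_diff_distrib exp_diff exp_minus field_simps)
          then show ?case
            using s[unfolded eq] elim u
            by (intro suminf_ennreal_eq[symmetric]) (auto intro!: mult_nonneg_nonneg)
        qed
      qed
      also have "\<dots> = (\<Sum>n. \<integral>\<^sup>+w. ennreal (u ^ n / fact n * (Z w ^ n * exp (- Z w))) \<partial>M)"
        by (rule nn_integral_suminf) measurable
      also have "\<dots> = (\<Sum>n. ennreal (a n * u ^ n))"
      proof (rule suminf_cong)
        fix n
        have "(\<integral>\<^sup>+w. ennreal (u ^ n / fact n * (Z w ^ n * exp (- Z w))) \<partial>M)
              = ennreal (integral\<^sup>L M (\<lambda>w. u ^ n / fact n * (Z w ^ n * exp (- Z w))))"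
          by (rule nn_integral_eq_integral) (use intn Zpos u in \<open>auto elim!: eventually_mono\<close>)
        also have "\<dots> = ennreal (a n * u ^ n)" by (simp add: a_def mult.commute)
        finally show "(\<integral>\<^sup>+w. ennreal (u ^ n / fact n * (Z w ^ n * exp (- Z w))) \<partial>M) = ennreal (a n * u ^ n)" .
      qed
      finally show ?thesis .
    qed
    have sumsT: "(\<lambda>n. a n * u ^ n) sums exp (\<theta> powr \<alpha> - (\<theta> + 1 - u) powr \<alpha>)"
      if "0 \<le> u" "u \<le> 1" for u
    proof -
      have "(\<Sum>n. ennreal (a n * u ^ n)) = ennreal (exp (\<theta> powr \<alpha> - (\<theta> + (1 - u)) powr \<alpha>))"
        using series[of u] nn_lap[of "1 - u"] that by (simp add: algebra_simps)
      then have "(\<lambda>n. ennreal (a n * u ^ n)) sums ennreal (exp (\<theta> powr \<alpha> - (\<theta> + 1 - u) powr \<alpha>))"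
        by (metis add_diff_eq summableI summable_sums)
      then show ?thesis using a_nn that by (subst (asm) sums_ennreal) auto
    qed
    have "(\<lambda>n. a n * (1 + \<mu>) ^ n) sums exp (\<theta> powr \<alpha> - (\<theta> + 1 - (1 + \<mu>)) powr \<alpha>)"
      by (rule powser_ext[where T = 1]) (use mu' sumsT in auto)
    then have "(\<lambda>n. ennreal (a n * (1 + \<mu>) ^ n)) sums ennreal (exp (\<theta> powr \<alpha> - (\<theta> - \<mu>) powr \<alpha>))"
      using a_nn mu' by (subst sums_ennreal) auto
    then have "(\<Sum>n. ennreal (a n * (1 + \<mu>) ^ n)) = ennreal (exp (\<theta> powr \<alpha> - (\<theta> - \<mu>) powr \<alpha>))"
      by (rule sums_unique[symmetric])
    then show ?thesis using series[of "1 + \<mu>"] mu' by simp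
  qed
  have int: "integrable M (\<lambda>w. exp (\<mu> * Z w))"
    by (rule integrableI_nn_integral_finite[OF _ _ main]) auto
  have "integral\<^sup>L M (\<lambda>w. exp (\<mu> * Z w)) = exp (\<theta> powr \<alpha> - (\<theta> - \<mu>) powr \<alpha>)"
    using nn_integral_eq_integral[OF int] main by auto
  with int show ?thesis by simp
qed

lemma frechet_pow:
  fixes x g \<tau> \<alpha>0 :: real
  assumes "0 < x" "0 < g" "0 < \<tau>" "0 < \<alpha>0"
  shows "((x / g powr \<alpha>0) / \<tau>) powr (- 1 / \<alpha>0) = (x / \<tau>) powr (- 1 / \<alpha>0) * g"
proof -
  have "(x / g powr \<alpha>0) / \<tau> = (x / \<tau>) / g powr \<alpha>0" by simp
  also have "\<dots> powr (- 1 / \<alpha>0) = (x / \<tau>) powr (- 1 / \<alpha>0) / (g powr \<alpha>0) powr (- 1 / \<alpha>0)"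
    using assms by (simp add: powr_divide powr_mult)
  also have "(g powr \<alpha>0) powr (- 1 / \<alpha>0) = 1 / g"
    using assms by (simp add: powr_powr powr_minus_divide)
  finally show ?thesis by simp
qed

lemma (in prob_space) eps_pos_AE:
  assumes em: "e \<in> borel_measurable M" and tau: "0 < \<tau>" and a0: "0 < \<alpha>0"
    and cdf: "\<forall>x>0. measure M {w \<in> space M. e w \<le> x} = exp (- ((x / \<tau>) powr (- 1 / \<alpha>0)))"
  shows "AE w in M. e w > 0"
proof -
  have [measurable]: "e \<in> borel_measurable M" by fact
  have le: "prob {w \<in> space M. e w \<le> 0} \<le> exp (- L)" if L: "L > 0" for L
  proof -
    define x where "x = \<tau> * L powr (- \<alpha>0)"
    have x: "x > 0" using L tau by (simp add: x_def)
    have "(x / \<tau>) powr (- 1 / \<alpha>0) = L"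
      using L tau a0 by (simp add: x_def powr_powr)
    then have "prob {w \<in> space M. e w \<le> x} = exp (- L)" using cdf x by simp
    moreover have "prob {w \<in> space M. e w \<le> 0} \<le> prob {w \<in> space M. e w \<le> x}"
      using x by (intro finite_measure_mono) auto
    ultimately show ?thesis by simp
  qed
  have "prob {w \<in> space M. e w \<le> 0} \<le> 0"
  proof (rule field_le_epsilon)
    fix d :: real assume d: "d > 0"
    define L where "L = max 1 (- ln d)"
    have "exp (- L) \<le> d"
    proof -
      have "exp (- L) \<le> exp (ln d)" unfolding L_def by simp
      then show ?thesis using d by simp
    qed
    moreover have "L > 0" by (simp add: L_def)
    ultimately show "prob {w \<in> space M. e w \<le> 0} \<le> 0 + d" using le[of L] by linarith
  qed
  then have "prob {w \<in> space M. e w \<le> 0} = 0" using measure_nonneg[of M] by (simp add: antisym)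
  then have "AE w in M. w \<notin> {w \<in> space M. e w \<le> 0}"
    by (subst (asm) prob_eq_0) auto
  then show ?thesis using AE_space by eventually_elim (auto simp: not_le)
qed

lemma model_cdf:
  fixes N :: "'b measure" and Z eps :: "nat \<Rightarrow> 'b \<Rightarrow> real" and x :: "nat \<Rightarrow> real"
  assumes mod: "model N \<alpha> \<alpha>0 \<tau> K \<theta> ns \<omega> Z eps"
    and a: "0 < \<alpha>" "0 < \<alpha>0" "0 < \<tau>"
    and th: "\<forall>k<K. \<theta> k \<ge> 0"
    and om: "\<forall>k<K. \<forall>j<ns. \<omega> k j \<ge> 0" and omnz: "\<forall>j<ns. \<exists>k<K. \<omega> k j \<noteq> 0"
  shows "joint_cdf N (Xvar \<alpha> \<alpha>0 K \<omega> Z eps) ns x =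
     (if \<forall>j<ns. 0 < x j then
        exp (- (\<Sum>k<K. (\<theta> k + (\<Sum>j<ns. \<omega> k j powr (1/\<alpha>) * (x j / \<tau>) powr (- 1 / \<alpha>0))) powr \<alpha> - \<theta> k powr \<alpha>))
      else 0)"
proof -
  note m = mod[unfolded model_def]
  interpret prob_space N using m by blast
  have Zm[measurable]: "Z k \<in> borel_measurable N" if "k < K" for k using m that by blast
  have em[measurable]: "eps j \<in> borel_measurable N" if "j < ns" for j using m that by blast
  have Zpos: "AE w in N. Z k w > 0" if "k < K" for k using m that by blast
  have lap: "\<forall>t\<ge>0. integral\<^sup>L N (\<lambda>w. exp (- t * Z k w)) = exp (- ((\<theta> k + t) powr \<alpha> - \<theta> k powr \<alpha>))"
    if "k < K" for k using m that by blast
  have ecdf: "\<forall>x>0. measure N {w \<in> space N. eps j w \<le> x} = exp (- ((x / \<tau>) powr (- 1 / \<alpha>0)))"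
    if "j < ns" for j using m that by blast
  define S where "S j w = (\<Sum>k<K. \<omega> k j powr (1 / \<alpha>) * Z k w)" for j w
  have Sm[measurable]: "S j \<in> borel_measurable N" for j unfolding S_def by measurable
  have XS: "Xvar \<alpha> \<alpha>0 K \<omega> Z eps j w = eps j w * S j w powr \<alpha>0" for j w
    by (simp add: Xvar_def S_def)
  have AEZ: "AE w in N. \<forall>k\<in>{..<K}. Z k w > 0"
    by (rule AE_finite_allI) (use Zpos in auto)
  have S_pos: "S j w > 0" if jj: "j < ns" and Zp: "\<forall>k\<in>{..<K}. Z k w > 0" for j w
  proof -
    obtain k where k: "k < K" "\<omega> k j \<noteq> 0" using omnz jj by blast
    have "\<omega> k j > 0" using om k jj by force
    then have "0 < \<omega> k j powr (1 / \<alpha>) * Z k w" using Zp k by simp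
    moreover have "\<forall>i\<in>{..<K}. 0 \<le> \<omega> i j powr (1 / \<alpha>) * Z i w"
    proof
      fix i assume i: "i \<in> {..<K}"
      then have "Z i w > 0" using Zp by blast
      then show "0 \<le> \<omega> i j powr (1 / \<alpha>) * Z i w" by simp
    qed
    ultimately show ?thesis unfolding S_def using k
      by (intro sum_pos2[where i=k]) auto
  qed
  have AEeps: "AE w in N. \<forall>j\<in>{..<ns}. eps j w > 0"
    by (rule AE_finite_allI) (use eps_pos_AE[OF em _ _ ecdf] a in auto)
  show ?thesis
  proof (cases "\<forall>j<ns. 0 < x j")
    case False
    then obtain j0 where j0: "j0 < ns" "x j0 \<le> 0" by (auto simp: not_less)
    have "prob {w \<in> space N. \<forall>j<ns. Xvar \<alpha> \<alpha>0 K \<omega> Z eps j w \<le> x j} = 0"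
    proof (rule prob_eq_0_AE)
      show "AE w in N. \<not> (\<forall>j<ns. Xvar \<alpha> \<alpha>0 K \<omega> Z eps j w \<le> x j)"
        using AEZ AEeps
      proof eventually_elim
        case (elim w)
        have "S j0 w > 0" using elim S_pos[OF j0(1)] by blast
        moreover have "eps j0 w > 0" using elim j0 by blast
        ultimately have "eps j0 w * S j0 w powr \<alpha>0 > 0" by simp
        then show ?case using j0 by (auto simp: XS intro!: exI[of _ j0])
      qed
    qed
    then show ?thesis using False by (simp add: joint_cdf_def)
  next
    case True
    note xpos = True
    show ?thesis
    proof (cases "ns = 0")
      case True
      then show ?thesis by (simp add: joint_cdf_def prob_space)
    next
      case False
      then have ns0: "ns > 0" by simp
      define I where "I = {..<K} <+> {..<ns}"
      define Y where "Y i w = (if i \<in> I then (case i of Inl k \<Rightarrow> Z k w | Inr j \<Rightarrow> eps j w) else 0)" for i w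
      have YL: "Y (Inl k) = Z k" if "k < K" for k using that by (auto simp: Y_def I_def fun_eq_iff)
      have YR: "Y (Inr j) = eps j" if "j < ns" for j using that by (auto simp: Y_def I_def fun_eq_iff)
      have Ym[measurable]: "Y i \<in> borel_measurable N" for i
      proof (cases "i \<in> I")
        case True
        then show ?thesis by (cases i) (auto simp: I_def YL YR)
      next
        case False
        then have "Y i = (\<lambda>_. 0)" by (simp add: Y_def fun_eq_iff)
        then show ?thesis by simp
      qed
      have indY: "indep_vars (\<lambda>_. borel) Y I"
      proof -
        have "indep_vars (\<lambda>_. borel) (\<lambda>i. case i of Inl k \<Rightarrow> Z k | Inr j \<Rightarrow> eps j) I"
          using m by (simp add: I_def)
        then show ?thesis
          by (rule indep_vars_cong[THEN iffD1, rotated -1]) (auto simp: Y_def fun_eq_iff split: sum.split)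
      qed
      define A :: "(nat + nat) set" where "A = Inl ` {..<K}"
      define B :: "(nat + nat) set" where "B = Inr ` {..<ns}"
      define PA where "PA = PiM A (\<lambda>_. borel :: real measure)"
      define PB where "PB = PiM B (\<lambda>_. borel :: real measure)"
      define VA where "VA w = restrict (\<lambda>i. Y i w) A" for w
      define VB where "VB w = restrict (\<lambda>i. Y i w) B" for w
      have AB: "A \<inter> B = {}" "A \<subseteq> I" "B \<subseteq> I" by (auto simp: A_def B_def I_def)
      have ind2: "indep_var PA VA PB VB"
        unfolding PA_def PB_def VA_def VB_def by (rule indep_var_restrict[OF indY AB])
      define DA where "DA = distr N PA VA"
      define DB where "DB = distr N PB VB"
      have VAm[measurable]: "VA \<in> measurable N PA" and VBm[measurable]: "VB \<in> measurable N PB"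
        and prodD: "DA \<Otimes>\<^sub>M DB = distr N (PA \<Otimes>\<^sub>M PB) (\<lambda>w. (VA w, VB w))"
        using ind2[unfolded indep_var_distribution_eq] by (auto simp: DA_def DB_def)
      interpret DBp: prob_space DB unfolding DB_def by (rule prob_space_distr) simp
      interpret DAp: prob_space DA unfolding DA_def by (rule prob_space_distr) simp
      have DB_Pi: "DB = PiM B (\<lambda>i. distr N borel (Y i))"
      proof -
        have "indep_vars (\<lambda>_. borel) Y B" by (rule indep_vars_subset[OF indY AB(3)])
        moreover have "B \<noteq> {}" using ns0 by (auto simp: B_def)
        ultimately show ?thesis
          unfolding DB_def PB_def VB_def by (subst (asm) indep_vars_iff_distr_eq_PiM) auto
      qed
      interpret PP: product_prob_space "\<lambda>i. distr N borel (Y i)"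
        by (rule product_prob_spaceI) (simp add: prob_space_distr)
      define g where "g j v = (\<Sum>k<K. \<omega> k j powr (1 / \<alpha>) * v (Inl k))" for j and v :: "nat + nat \<Rightarrow> real"
      have comp[measurable]: "(\<lambda>v. v (Inl k)) \<in> borel_measurable PA" if "k < K" for k
        unfolding PA_def by (rule measurable_component_singleton) (use that in \<open>auto simp: A_def\<close>)
      have gm: "g j \<in> borel_measurable PA" for j
        unfolding g_def by (intro borel_measurable_sum borel_measurable_times measurable_const comp) auto
      have gVA: "g j (VA w) = S j w" for j w
        unfolding g_def S_def VA_def by (intro sum.cong) (auto simp: A_def YL)
      define F where "F j p = snd p (Inr j) * g j (fst p) powr \<alpha>0" for j and p :: "(nat + nat \<Rightarrow> real) \<times> (nat + nat \<Rightarrow> real)"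
      have Fm: "F j \<in> borel_measurable (PA \<Otimes>\<^sub>M PB)" if "j < ns" for j
      proof -
        have [measurable]: "(\<lambda>v. v (Inr j)) \<in> borel_measurable PB"
          unfolding PB_def by (rule measurable_component_singleton) (use that in \<open>auto simp: B_def\<close>)
        have [measurable]: "g j \<in> borel_measurable PA" by (rule gm)
        show ?thesis unfolding F_def by measurable
      qed
      define C where "C = {p \<in> space (PA \<Otimes>\<^sub>M PB). \<forall>j\<in>{..<ns}. F j p \<le> x j}"
      have Cm: "C \<in> sets (PA \<Otimes>\<^sub>M PB)"
      proof -
        have "C = space (PA \<Otimes>\<^sub>M PB) \<inter> (\<Inter>j\<in>{..<ns}. {p \<in> space (PA \<Otimes>\<^sub>M PB). F j p \<le> x j})"
          unfolding C_def using ns0 by auto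
        also have "\<dots> \<in> sets (PA \<Otimes>\<^sub>M PB)"
        proof (intro sets.Int sets.top sets.finite_INT)
          fix j assume "j \<in> {..<ns}"
          then have [measurable]: "F j \<in> borel_measurable (PA \<Otimes>\<^sub>M PB)" using Fm by auto
          show "{p \<in> space (PA \<Otimes>\<^sub>M PB). F j p \<le> x j} \<in> sets (PA \<Otimes>\<^sub>M PB)" by measurable
        qed (use ns0 in auto)
        finally show ?thesis .
      qed
      define E where "E = {w \<in> space N. \<forall>j<ns. Xvar \<alpha> \<alpha>0 K \<omega> Z eps j w \<le> x j}"
      have E_eq: "E = (\<lambda>w. (VA w, VB w)) -` C \<inter> space N"
      proof -
        have "VA w \<in> space PA" "VB w \<in> space PB" if "w \<in> space N" for w
          using that VAm VBm by (auto simp: measurable_def)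
        moreover have "VB w (Inr j) = eps j w" if "j < ns" for j w
          using that by (auto simp: VB_def B_def YR)
        ultimately show ?thesis
          by (auto simp: E_def C_def F_def XS gVA space_pair_measure)
      qed
      have emE: "emeasure N E = (\<integral>\<^sup>+v. emeasure DB (Pair v -` C) \<partial>DA)"
      proof -
        have "emeasure N E = emeasure (distr N (PA \<Otimes>\<^sub>M PB) (\<lambda>w. (VA w, VB w))) C"
          using Cm by (subst emeasure_distr) (auto simp: E_eq)
        also have "\<dots> = emeasure (DA \<Otimes>\<^sub>M DB) C" by (simp add: prodD)
        also have "\<dots> = (\<integral>\<^sup>+v. emeasure DB (Pair v -` C) \<partial>DA)"
          using Cm by (intro DBp.emeasure_pair_measure_alt) (simp add: DA_def DB_def)
        finally show ?thesis .
      qed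
      define t where "t k = (\<Sum>j<ns. \<omega> k j powr (1/\<alpha>) * (x j / \<tau>) powr (- 1 / \<alpha>0))" for k
      have t_nn: "t k \<ge> 0" for k unfolding t_def by (intro sum_nonneg) auto
      have sect: "emeasure DB (Pair v -` C) = ennreal (exp (- (\<Sum>k<K. t k * v (Inl k))))"
        if v: "v \<in> space PA" and gpos: "\<forall>j<ns. g j v > 0" for v
      proof -
        have gpos': "g j v > 0" if "j < ns" for j using gpos that by blast
        define c :: "nat + nat \<Rightarrow> real" where "c i = (case i of Inr j \<Rightarrow> x j / g j v powr \<alpha>0 | Inl _ \<Rightarrow> 0)" for i
        have key: "r * g j v powr \<alpha>0 \<le> x j \<longleftrightarrow> r \<le> c (Inr j)" if "j < ns" for j r
        proof -
          have "g j v powr \<alpha>0 > 0" using gpos'[OF that] by simp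
          then show ?thesis by (simp add: c_def pos_le_divide_eq)
        qed
        have eqset: "Pair v -` C = PiE B (\<lambda>i. {..c i})"
        proof (intro set_eqI iffI)
          fix e assume "e \<in> Pair v -` C"
          then have e: "e \<in> space PB" "\<forall>j\<in>{..<ns}. e (Inr j) * g j v powr \<alpha>0 \<le> x j"
            by (auto simp: C_def F_def space_pair_measure)
          have "e \<in> extensional B" using e(1) by (simp add: PB_def space_PiM PiE_def)
          moreover have "e i \<in> {..c i}" if "i \<in> B" for i
            using that e(2) key by (auto simp: B_def)
          ultimately show "e \<in> PiE B (\<lambda>i. {..c i})" by (auto simp: PiE_def)
        next
          fix e assume e: "e \<in> PiE B (\<lambda>i. {..c i})"
          then have "e \<in> space PB" by (auto simp: PB_def space_PiM PiE_def)
          moreover have "\<forall>j\<in>{..<ns}. e (Inr j) * g j v powr \<alpha>0 \<le> x j"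
            using e key by (auto simp: B_def PiE_def Pi_def)
          ultimately show "e \<in> Pair v -` C" using v by (auto simp: C_def F_def space_pair_measure)
        qed
        have "emeasure DB (Pair v -` C) = (\<Prod>i\<in>B. emeasure (distr N borel (Y i)) {..c i})"
          unfolding eqset DB_Pi by (rule PP.emeasure_PiM) (auto simp: B_def)
        also have "\<dots> = (\<Prod>j<ns. emeasure (distr N borel (Y (Inr j))) {..c (Inr j)})"
          unfolding B_def by (subst prod.reindex) auto
        also have "\<dots> = (\<Prod>j<ns. ennreal (exp (- ((x j / \<tau>) powr (- 1 / \<alpha>0) * g j v))))"
        proof (rule prod.cong[OF refl])
          fix j assume j: "j \<in> {..<ns}"
          have cp: "c (Inr j) > 0" using j gpos'[of j] xpos by (simp add: c_def)
          have "emeasure (distr N borel (Y (Inr j))) {..c (Inr j)} = emeasure N {w \<in> space N. eps j w \<le> c (Inr j)}"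
            using j by (subst emeasure_distr) (auto simp: YR intro!: arg_cong[where f="emeasure N"])
          also have "\<dots> = ennreal (exp (- (((x j / g j v powr \<alpha>0) / \<tau>) powr (- 1 / \<alpha>0))))"
            using ecdf[of j] j cp by (simp add: emeasure_eq_measure c_def)
          also have "\<dots> = ennreal (exp (- ((x j / \<tau>) powr (- 1 / \<alpha>0) * g j v)))"
            using frechet_pow[of "x j" "g j v" \<tau> \<alpha>0] j gpos'[of j] xpos a by simp
          finally show "emeasure (distr N borel (Y (Inr j))) {..c (Inr j)} = ennreal (exp (- ((x j / \<tau>) powr (- 1 / \<alpha>0) * g j v)))" .
        qed
        also have "\<dots> = ennreal (exp (- (\<Sum>j<ns. (x j / \<tau>) powr (- 1 / \<alpha>0) * g j v)))"
          by (simp add: prod_ennreal exp_sum flip: sum_negf)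
        also have "(\<Sum>j<ns. (x j / \<tau>) powr (- 1 / \<alpha>0) * g j v) = (\<Sum>k<K. t k * v (Inl k))"
          unfolding g_def t_def
          by (simp add: sum_distrib_left sum_distrib_right mult_ac) (rule sum.swap)
        finally show ?thesis .
      qed
      have msr: "(\<lambda>v. emeasure DB (Pair v -` C)) \<in> borel_measurable PA"
      proof -
        have "sets (PA \<Otimes>\<^sub>M DB) = sets (PA \<Otimes>\<^sub>M PB)"
          by (rule sets_pair_measure_cong) (auto simp: DB_def)
        then show ?thesis
          using Cm by (intro DBp.measurable_emeasure_Pair) simp
      qed
      have "(\<integral>\<^sup>+v. emeasure DB (Pair v -` C) \<partial>DA) = (\<integral>\<^sup>+w. emeasure DB (Pair (VA w) -` C) \<partial>N)"
        unfolding DA_def by (rule nn_integral_distr[OF VAm]) (use msr in simp)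
      also have "\<dots> = (\<integral>\<^sup>+w. ennreal (\<Prod>k<K. exp (- t k * Z k w)) \<partial>N)"
      proof (rule nn_integral_cong_AE)
        show "AE w in N. emeasure DB (Pair (VA w) -` C) = ennreal (\<Prod>k<K. exp (- t k * Z k w))"
          using AEZ AE_space
        proof eventually_elim
          case (elim w)
          have "VA w \<in> space PA" using VAm elim by (auto simp: measurable_def)
          moreover have "\<forall>j<ns. g j (VA w) > 0" using S_pos elim by (simp add: gVA)
          ultimately have "emeasure DB (Pair (VA w) -` C) = ennreal (exp (- (\<Sum>k<K. t k * VA w (Inl k))))"
            by (rule sect)
          also have "(\<Sum>k<K. t k * VA w (Inl k)) = (\<Sum>k<K. t k * Z k w)"
            by (intro sum.cong) (auto simp: VA_def A_def YL)
          also have "exp (- \<dots>) = (\<Prod>k<K. exp (- t k * Z k w))"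
            by (simp add: exp_sum flip: sum_negf)
          finally show ?case .
        qed
      qed
      also have "\<dots> = ennreal (\<Prod>k<K. exp (- ((\<theta> k + t k) powr \<alpha> - \<theta> k powr \<alpha>)))"
      proof -
        have indA: "indep_vars (\<lambda>_. borel) Y A" by (rule indep_vars_subset[OF indY AB(2)])
        define f where "f i w = exp (- t (projl i) * Y i w)" for i w
        have indf: "indep_vars (\<lambda>_. borel) f A"
          unfolding f_def by (rule indep_vars_compose2[OF indA]) simp
        have fL: "f (Inl k) = (\<lambda>w. exp (- t k * Z k w))" if "k < K" for k
          using that by (simp add: f_def YL fun_eq_iff)
        have intf: "integrable N (f i)" if iA: "i \<in> A" for i
        proof -
          obtain k where k: "k < K" "i = Inl k" using iA by (auto simp: A_def)
          show ?thesis unfolding k(2) fL[OF k(1)]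
          proof (rule integrable_const_bound[where B=1])
            show "AE w in N. norm (exp (- t k * Z k w)) \<le> 1"
              using Zpos[OF k(1)] by eventually_elim (simp add: t_nn)
          qed (use k in simp)
        qed
        have finA: "finite A" by (simp add: A_def)
        have prodeq: "(\<Prod>i\<in>A. h i) = (\<Prod>k<K. h (Inl k))" for h :: "nat + nat \<Rightarrow> real"
          unfolding A_def by (subst prod.reindex) auto
        have int: "integrable N (\<lambda>w. \<Prod>i\<in>A. f i w)" by (rule indep_vars_integrable[OF finA indf intf])
        have pw: "(\<Prod>i\<in>A. f i w) = (\<Prod>k<K. exp (- t k * Z k w))" for w
          unfolding prodeq by (intro prod.cong refl) (simp add: fL)
        have "(\<integral>\<^sup>+w. ennreal (\<Prod>k<K. exp (- t k * Z k w)) \<partial>N) = (\<integral>\<^sup>+w. ennreal (\<Prod>i\<in>A. f i w) \<partial>N)"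
          by (simp add: pw)
        also have "\<dots> = ennreal (\<integral>w. (\<Prod>i\<in>A. f i w) \<partial>N)"
          by (rule nn_integral_eq_integral[OF int]) (auto simp: f_def prod_nonneg)
        also have "(\<integral>w. (\<Prod>i\<in>A. f i w) \<partial>N) = (\<Prod>i\<in>A. \<integral>w. f i w \<partial>N)"
          by (rule indep_vars_lebesgue_integral[OF finA indf intf])
        also have "\<dots> = (\<Prod>k<K. exp (- ((\<theta> k + t k) powr \<alpha> - \<theta> k powr \<alpha>)))"
        proof (unfold prodeq, intro prod.cong refl)
          fix k assume "k \<in> {..<K}"
          then have k: "k < K" by simp
          show "integral\<^sup>L N (f (Inl k)) = exp (- ((\<theta> k + t k) powr \<alpha> - \<theta> k powr \<alpha>))"
            using lap[OF k, rule_format, OF t_nn[of k]] by (simp add: fL[OF k])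
        qed
        finally show ?thesis .
      qed
      finally have "emeasure N E = ennreal (\<Prod>k<K. exp (- ((\<theta> k + t k) powr \<alpha> - \<theta> k powr \<alpha>)))"
        using emE by simp
      then have "prob E = (\<Prod>k<K. exp (- ((\<theta> k + t k) powr \<alpha> - \<theta> k powr \<alpha>)))"
        by (simp add: emeasure_eq_measure prod_nonneg)
      then show ?thesis using xpos
        by (simp add: joint_cdf_def E_def t_def exp_sum flip: sum_negf)
    qed
  qed
qed

lemma build_model:
  fixes \<mu> \<nu> :: "nat \<Rightarrow> real measure" and \<theta> :: "nat \<Rightarrow> real"
  assumes K1: "K \<ge> 1"
    and \<mu>p: "\<And>k. k < K \<Longrightarrow> prob_space (\<mu> k)"
    and \<mu>s: "\<And>k. k < K \<Longrightarrow> sets (\<mu> k) = sets borel"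
    and \<mu>pos: "\<And>k. k < K \<Longrightarrow> AE z in \<mu> k. z > 0"
    and \<mu>lap: "\<And>k t. k < K \<Longrightarrow> t \<ge> 0 \<Longrightarrow>
        integral\<^sup>L (\<mu> k) (\<lambda>z. exp (- t * z)) = exp (- ((\<theta> k + t) powr \<alpha> - \<theta> k powr \<alpha>))"
    and \<nu>p: "\<And>j. j < ns \<Longrightarrow> prob_space (\<nu> j)"
    and \<nu>s: "\<And>j. j < ns \<Longrightarrow> sets (\<nu> j) = sets borel"
    and \<nu>cdf: "\<And>j x. j < ns \<Longrightarrow> x > 0 \<Longrightarrow> measure (\<nu> j) {..x} = exp (- ((x / \<tau>) powr (- 1 / \<alpha>0)))"
  shows "\<exists>(N :: (nat \<Rightarrow> real) measure) Z' eps'. model N \<alpha> \<alpha>0 \<tau> K \<theta> ns \<omega> Z' eps'"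
proof -
  define J where "J = {..<K + ns}"
  define Mi where "Mi i = (if i < K then \<mu> i else \<nu> (i - K))" for i
  have Mp: "prob_space (Mi i)" if "i \<in> J" for i
    using that \<mu>p \<nu>p by (auto simp: Mi_def J_def)
  have Ms: "sets (Mi i) = sets borel" if "i \<in> J" for i
    using that \<mu>s \<nu>s by (auto simp: Mi_def J_def)
  define N where "N = PiM J Mi"
  define Z' where "Z' k = (\<lambda>x::nat\<Rightarrow>real. x k)" for k
  define eps' where "eps' j = (\<lambda>x::nat\<Rightarrow>real. x (K + j))" for j
  have Np: "prob_space N" unfolding N_def by (rule prob_space_PiM) (rule Mp)
  interpret prob_space N by fact
  have compm: "(\<lambda>x. x i) \<in> borel_measurable N" if "i \<in> J" for i
  proof -
    have "(\<lambda>x. x i) \<in> measurable N (Mi i)" unfolding N_def by (rule measurable_component_singleton) fact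
    then show ?thesis using measurable_cong_sets[OF refl Ms[OF that], of N] by simp
  qed
  have distr_comp: "distr N borel (\<lambda>x. x i) = Mi i" if "i \<in> J" for i
  proof -
    have "distr N borel (\<lambda>x. x i) = distr N (Mi i) (\<lambda>x. x i)" by (rule distr_cong) (use Ms[OF that] in auto)
    also have "\<dots> = Mi i" unfolding N_def by (rule distr_PiM_component[OF Mp that])
    finally show ?thesis .
  qed
  define I where "I = {..<K} <+> {..<ns}"
  define h where "h i = (case i of Inl k \<Rightarrow> k | Inr j \<Rightarrow> K + j)" for i
  have hinj: "inj_on h I" unfolding inj_on_def h_def I_def by (auto split: sum.splits)
  have hJ: "h \<in> I \<rightarrow> J" by (auto simp: h_def I_def J_def split: sum.splits)
  have hJ': "h i \<in> J" if "i \<in> I" for i using hJ that by auto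
  have ind: "indep_vars (\<lambda>_. borel) (\<lambda>i x. x (h i)) I"
  proof (subst indep_vars_iff_distr_eq_PiM')
    have "Inl 0 \<in> I" using K1 by (auto simp: I_def)
    then show "I \<noteq> {}" by blast
    show "random_variable borel (\<lambda>x. x (h i))" if "i \<in> I" for i
      using compm hJ that by auto
    have "distr N (PiM I (\<lambda>_. borel)) (\<lambda>x. \<lambda>i\<in>I. x (h i)) = distr N (PiM I (\<lambda>i. Mi (h i))) (\<lambda>x. \<lambda>i\<in>I. x (h i))"
      by (rule distr_cong) (auto intro!: sets_PiM_cong Ms[symmetric] simp: hJ')
    also have "\<dots> = PiM I (\<lambda>i. Mi (h i))" unfolding N_def by (rule distr_PiM_reindex[OF Mp hinj hJ])
    also have "\<dots> = PiM I (\<lambda>i. distr N borel (\<lambda>x. x (h i)))"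
      by (rule PiM_cong) (use hJ' distr_comp in auto)
    finally show "distr N (PiM I (\<lambda>_. borel)) (\<lambda>x. \<lambda>i\<in>I. x (h i)) = PiM I (\<lambda>i. distr N borel (\<lambda>x. x (h i)))" .
  qed
  have "model N \<alpha> \<alpha>0 \<tau> K \<theta> ns \<omega> Z' eps'"
    unfolding model_def
  proof (intro conjI allI impI)
    show "prob_space N" by fact
    show "Z' k \<in> borel_measurable N" if "k < K" for k
      unfolding Z'_def using that by (intro compm) (simp add: J_def)
    show "eps' j \<in> borel_measurable N" if "j < ns" for j
      unfolding eps'_def using that by (intro compm) (simp add: J_def)
    show "indep_vars (\<lambda>_. borel) (\<lambda>i. case i of Inl k \<Rightarrow> Z' k | Inr j \<Rightarrow> eps' j) ({..<K} <+> {..<ns})"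
      using ind unfolding I_def
      by (rule indep_vars_cong[THEN iffD1, rotated -1]) (auto simp: h_def Z'_def eps'_def fun_eq_iff split: sum.split)
    show "AE w in N. Z' k w > 0" if "k < K" for k
      unfolding N_def Z'_def
    proof -
      have kJ: "k \<in> J" using that by (simp add: J_def)
      have Mk: "Mi k = \<mu> k" using that by (simp add: Mi_def)
      have "AE x in Mi k. 0 < x" unfolding Mk by (rule \<mu>pos[OF that])
      then show "AE x in PiM J Mi. 0 < x k"
        using AE_PiM_component[where I=J and M=Mi and i=k and P="\<lambda>x. 0 < x", OF Mp kJ] by blast
    qed
    show "integral\<^sup>L N (\<lambda>w. exp (- t * Z' k w)) = exp (- ((\<theta> k + t) powr \<alpha> - \<theta> k powr \<alpha>))"
      if "k < K" "t \<ge> 0" for k t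
    proof -
      have kJ: "k \<in> J" using that by (simp add: J_def)
      have "integral\<^sup>L N (\<lambda>w. exp (- t * Z' k w)) = integral\<^sup>L (distr N borel (\<lambda>x. x k)) (\<lambda>z. exp (- t * z))"
        by (subst integral_distr) (use compm[OF kJ] in \<open>auto simp: Z'_def\<close>)
      also have "\<dots> = integral\<^sup>L (\<mu> k) (\<lambda>z. exp (- t * z))"
        using distr_comp[OF kJ] that by (simp add: Mi_def)
      finally show ?thesis using \<mu>lap that by simp
    qed
    show "measure N {w \<in> space N. eps' j w \<le> x} = exp (- ((x / \<tau>) powr (- 1 / \<alpha>0)))"
      if "j < ns" "x > 0" for j x
    proof -
      have jJ: "K + j \<in> J" using that by (simp add: J_def)
      have "measure N {w \<in> space N. eps' j w \<le> x} = measure (distr N borel (\<lambda>x. x (K + j))) {..x}"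
        by (subst measure_distr) (use compm[OF jJ] in \<open>auto simp: eps'_def intro!: arg_cong[where f="measure N"]\<close>)
      also have "\<dots> = measure (\<nu> j) {..x}"
        using distr_comp[OF jJ] that by (simp add: Mi_def)
      finally show ?thesis using \<nu>cdf that by simp
    qed
  qed
  then show ?thesis by blast
qed

lemma tilt_exists:
  fixes M :: "'a measure" and Z :: "'a \<Rightarrow> real" and \<theta> \<theta>' \<alpha> :: real
  assumes M: "prob_space M" and Zm: "Z \<in> borel_measurable M" and Zpos: "AE w in M. Z w > 0"
    and th: "\<theta> \<ge> 0"
    and lap: "\<forall>t\<ge>0. integral\<^sup>L M (\<lambda>w. exp (- t * Z w)) = exp (- ((\<theta> + t) powr \<alpha> - \<theta> powr \<alpha>))"
    and th': "\<theta>' \<ge> 0" "\<theta> > 0 \<Longrightarrow> \<theta>' > 0"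
  shows "\<exists>\<mu> :: real measure. prob_space \<mu> \<and> sets \<mu> = sets borel \<and> (AE z in \<mu>. z > 0) \<and>
     (\<forall>t\<ge>0. integral\<^sup>L \<mu> (\<lambda>z. exp (- t * z)) = exp (- ((\<theta>' + t) powr \<alpha> - \<theta>' powr \<alpha>)))"
proof -
  interpret prob_space M by fact
  have [measurable]: "Z \<in> borel_measurable M" by fact
  define l where "l = \<theta> - \<theta>'"
  define C where "C = exp (\<theta> powr \<alpha> - \<theta>' powr \<alpha>)"
  have Cpos: "C > 0" by (simp add: C_def)
  have ext: "integrable M (\<lambda>w. exp ((l - t) * Z w)) \<and>
      integral\<^sup>L M (\<lambda>w. exp ((l - t) * Z w)) = exp (\<theta> powr \<alpha> - (\<theta>' + t) powr \<alpha>)" if t: "t \<ge> 0" for t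
  proof -
    have "l - t < \<theta> \<or> l - t \<le> 0"
    proof (cases "\<theta> > 0")
      case True then show ?thesis using th'(2) t by (simp add: l_def)
    next
      case False then show ?thesis using th th' t by (simp add: l_def)
    qed
    from laplace_ext[OF M Zm Zpos th lap this] show ?thesis by (simp add: l_def)
  qed
  define \<rho> where "\<rho> = distr M borel Z"
  define g where "g z = exp (l * z) / C" for z
  define \<mu> where "\<mu> = density \<rho> (\<lambda>z. ennreal (g z))"
  have gm[measurable]: "g \<in> borel_measurable borel" unfolding g_def by measurable
  have sets\<mu>: "sets \<mu> = sets borel" by (simp add: \<mu>_def \<rho>_def)
  have "emeasure \<mu> (space \<mu>) = 1"
  proof -
    have "emeasure \<mu> (space \<mu>) = (\<integral>\<^sup>+z. ennreal (g z) \<partial>\<rho>)"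
      unfolding \<mu>_def by (subst emeasure_density) (auto simp: \<rho>_def intro!: nn_integral_cong)
    also have "\<dots> = (\<integral>\<^sup>+w. ennreal (g (Z w)) \<partial>M)"
      unfolding \<rho>_def by (rule nn_integral_distr) auto
    also have "\<dots> = ennreal (integral\<^sup>L M (\<lambda>w. g (Z w)))"
    proof (rule nn_integral_eq_integral)
      show "integrable M (\<lambda>w. g (Z w))"
        using ext[of 0] unfolding g_def by simp
    qed (auto simp: g_def Cpos less_imp_le)
    also have "integral\<^sup>L M (\<lambda>w. g (Z w)) = 1"
      using ext[of 0] Cpos by (simp add: g_def C_def)
    finally show ?thesis by simp
  qed
  then have P: "prob_space \<mu>" by (rule prob_spaceI)
  have AEpos: "AE z in \<mu>. z > 0"
  proof -
    have "AE z in \<rho>. z > 0"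
      unfolding \<rho>_def by (subst AE_distr_iff) (auto simp: Zpos)
    then show ?thesis unfolding \<mu>_def by (subst AE_density) (auto simp: \<rho>_def elim!: eventually_mono)
  qed
  have L: "integral\<^sup>L \<mu> (\<lambda>z. exp (- t * z)) = exp (- ((\<theta>' + t) powr \<alpha> - \<theta>' powr \<alpha>))" if t: "t \<ge> 0" for t
  proof -
    have "integral\<^sup>L \<mu> (\<lambda>z. exp (- t * z)) = integral\<^sup>L \<rho> (\<lambda>z. g z * exp (- t * z))"
      unfolding \<mu>_def by (subst integral_density) (auto simp: \<rho>_def g_def Cpos less_imp_le)
    also have "\<dots> = integral\<^sup>L M (\<lambda>w. g (Z w) * exp (- t * Z w))"
      unfolding \<rho>_def by (rule integral_distr) auto
    also have "\<dots> = integral\<^sup>L M (\<lambda>w. exp ((l - t) * Z w) / C)"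
      by (rule Bochner_Integration.integral_cong) (auto simp: g_def left_diff_distrib exp_diff exp_minus field_simps)
    also have "\<dots> = exp (\<theta> powr \<alpha> - (\<theta>' + t) powr \<alpha>) / C"
      using ext[OF t] by simp
    also have "\<dots> = exp (- ((\<theta>' + t) powr \<alpha> - \<theta>' powr \<alpha>))"
      unfolding C_def by (simp flip: exp_diff)
    finally show ?thesis .
  qed
  show ?thesis using P sets\<mu> AEpos L by blast
qed

lemma exp_powr_real: "exp (a::real) powr b = exp (a * b)"
  by (simp add: powr_def mult.commute)

lemma scale_cdf:
  fixes M :: "'a measure" and N :: "'b measure"
  assumes a: "0 < \<alpha>" "0 < \<alpha>0" "0 < \<tau>" and s: "s > 0"
    and th: "\<forall>k<K. \<theta> k \<ge> 0"
    and om: "\<forall>k<K. \<forall>j<ns. \<omega> k j \<ge> 0" and omnz: "\<forall>j<ns. \<exists>k<K. \<omega> k j \<noteq> 0"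
    and mM: "model M \<alpha> \<alpha>0 \<tau> K \<theta> ns \<omega> Z eps"
    and mN: "model N \<alpha> \<alpha>0 \<tau> K (\<lambda>k. \<theta> k / s powr (1 / \<alpha>)) ns (\<lambda>k j. \<omega> k j / s) Z' eps'"
  shows "joint_cdf N (Xvar \<alpha> \<alpha>0 K (\<lambda>k j. \<omega> k j / s) Z' eps') ns x
       = joint_cdf M (Xvar \<alpha> \<alpha>0 K \<omega> Z eps) ns x powr (1 / s)"
proof -
  define c where "c = s powr (1 / \<alpha>)"
  have c: "c > 0" using s by (simp add: c_def)
  have cpow: "c powr \<alpha> = s" using s a by (simp add: c_def powr_powr)
  have th': "\<forall>k<K. \<theta> k / s powr (1 / \<alpha>) \<ge> 0" using th s by simp
  have om': "\<forall>k<K. \<forall>j<ns. \<omega> k j / s \<ge> 0" using om s by simp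
  have omnz': "\<forall>j<ns. \<exists>k<K. \<omega> k j / s \<noteq> 0" using omnz s by simp
  note cN = model_cdf[OF mN a th' om' omnz', of x]
  note cM = model_cdf[OF mM a th om omnz, of x]
  show ?thesis
  proof (cases "\<forall>j<ns. 0 < x j")
    case False
    then have nc: "(\<forall>j<ns. 0 < x j) = False" by blast
    show ?thesis using cN cM s by (simp only: nc if_False) simp
  next
    case True
    define T where "T k = (\<Sum>j<ns. \<omega> k j powr (1/\<alpha>) * (x j / \<tau>) powr (- 1 / \<alpha>0))" for k
    have Tnn: "T k \<ge> 0" for k unfolding T_def by (intro sum_nonneg) auto
    have T': "(\<Sum>j<ns. (\<omega> k j / s) powr (1/\<alpha>) * (x j / \<tau>) powr (- 1 / \<alpha>0)) = T k / c" if k: "k < K" for k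
    proof -
      have "(\<Sum>j<ns. (\<omega> k j / s) powr (1/\<alpha>) * (x j / \<tau>) powr (- 1 / \<alpha>0))
          = (\<Sum>j<ns. \<omega> k j powr (1/\<alpha>) * (x j / \<tau>) powr (- 1 / \<alpha>0) / c)"
        using om k s by (intro sum.cong refl) (simp add: powr_divide c_def)
      also have "\<dots> = T k / c" by (simp add: T_def sum_divide_distrib)
      finally show ?thesis .
    qed
    have trm: "(\<theta> k / s powr (1 / \<alpha>) + (\<Sum>j<ns. (\<omega> k j / s) powr (1/\<alpha>) * (x j / \<tau>) powr (- 1 / \<alpha>0))) powr \<alpha>
                - (\<theta> k / s powr (1 / \<alpha>)) powr \<alpha> = ((\<theta> k + T k) powr \<alpha> - \<theta> k powr \<alpha>) / s"
      if k: "k < K" for k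
    proof -
      have "\<theta> k / s powr (1 / \<alpha>) + (\<Sum>j<ns. (\<omega> k j / s) powr (1/\<alpha>) * (x j / \<tau>) powr (- 1 / \<alpha>0))
            = (\<theta> k + T k) / c"
        using T'[OF k] by (simp add: c_def add_divide_distrib)
      moreover have "((\<theta> k + T k) / c) powr \<alpha> = (\<theta> k + T k) powr \<alpha> / s"
        using th k Tnn[of k] c cpow by (simp add: powr_divide)
      moreover have "(\<theta> k / c) powr \<alpha> = \<theta> k powr \<alpha> / s"
        using th k c cpow by (simp add: powr_divide)
      ultimately show ?thesis by (simp add: c_def diff_divide_distrib)
    qed
    have "joint_cdf N (Xvar \<alpha> \<alpha>0 K (\<lambda>k j. \<omega> k j / s) Z' eps') ns x
        = exp (- (\<Sum>k<K. ((\<theta> k + T k) powr \<alpha> - \<theta> k powr \<alpha>) / s))"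
      using cN True trm by (simp add: T_def)
    also have "\<dots> = exp (- (\<Sum>k<K. (\<theta> k + T k) powr \<alpha> - \<theta> k powr \<alpha>)) powr (1 / s)"
      by (simp add: exp_powr_real sum_divide_distrib)
    also have "\<dots> = joint_cdf M (Xvar \<alpha> \<alpha>0 K \<omega> Z eps) ns x powr (1 / s)"
      using cM True by (simp add: T_def)
    finally show ?thesis .
  qed
qed

lemma exists_scaled:
  fixes M :: "'a measure"
  assumes a: "0 < \<alpha>" "0 < \<alpha>0" "0 < \<tau>" and K1: "K \<ge> 1" and s: "s > 0"
    and th: "\<forall>k<K. \<theta> k \<ge> 0"
    and mM: "model M \<alpha> \<alpha>0 \<tau> K \<theta> ns \<omega> Z eps"
  shows "\<exists>(N :: (nat \<Rightarrow> real) measure) Z' eps'.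
           model N \<alpha> \<alpha>0 \<tau> K (\<lambda>k. \<theta> k / s powr (1 / \<alpha>)) ns \<omega>' Z' eps'"
proof -
  note m = mM[unfolded model_def]
  have Mp: "prob_space M" using m by blast
  interpret prob_space M by fact
  have "\<forall>k\<in>{..<K}. \<exists>\<mu> :: real measure. prob_space \<mu> \<and> sets \<mu> = sets borel \<and> (AE z in \<mu>. z > 0) \<and>
     (\<forall>t\<ge>0. integral\<^sup>L \<mu> (\<lambda>z. exp (- t * z)) = exp (- ((\<theta> k / s powr (1 / \<alpha>) + t) powr \<alpha> - (\<theta> k / s powr (1 / \<alpha>)) powr \<alpha>)))"
  proof
    fix k assume "k \<in> {..<K}"
    then have k: "k < K" by simp
    show "\<exists>\<mu> :: real measure. prob_space \<mu> \<and> sets \<mu> = sets borel \<and> (AE z in \<mu>. z > 0) \<and>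
     (\<forall>t\<ge>0. integral\<^sup>L \<mu> (\<lambda>z. exp (- t * z)) = exp (- ((\<theta> k / s powr (1 / \<alpha>) + t) powr \<alpha> - (\<theta> k / s powr (1 / \<alpha>)) powr \<alpha>)))"
    proof (rule tilt_exists[OF Mp])
      show "Z k \<in> borel_measurable M" using m k by blast
      show "AE w in M. Z k w > 0" using m k by blast
      show "\<theta> k \<ge> 0" using th k by blast
      show "\<forall>t\<ge>0. integral\<^sup>L M (\<lambda>w. exp (- t * Z k w)) = exp (- ((\<theta> k + t) powr \<alpha> - \<theta> k powr \<alpha>))"
        using m k by blast
      show "\<theta> k / s powr (1 / \<alpha>) \<ge> 0" using th k s by simp
      show "\<theta> k > 0 \<Longrightarrow> \<theta> k / s powr (1 / \<alpha>) > 0" using s by simp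
    qed
  qed
  then obtain \<mu> where \<mu>: "\<forall>k\<in>{..<K}. prob_space (\<mu> k) \<and> sets (\<mu> k) = sets borel \<and> (AE z in \<mu> k. z > 0) \<and>
     (\<forall>t\<ge>0. integral\<^sup>L (\<mu> k) (\<lambda>z. exp (- t * z)) = exp (- ((\<theta> k / s powr (1 / \<alpha>) + t) powr \<alpha> - (\<theta> k / s powr (1 / \<alpha>)) powr \<alpha>)))"
    by (rule bchoice[THEN exE]) blast
  define \<nu> where "\<nu> j = distr M borel (eps j)" for j
  have em: "eps j \<in> borel_measurable M" if "j < ns" for j using m that by blast
  show ?thesis
  proof (rule build_model[OF K1])
    show "prob_space (\<mu> k)" "sets (\<mu> k) = sets borel" "AE z in \<mu> k. z > 0" if "k < K" for k
      using \<mu> that by auto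
    show "integral\<^sup>L (\<mu> k) (\<lambda>z. exp (- t * z)) = exp (- ((\<theta> k / s powr (1 / \<alpha>) + t) powr \<alpha> - (\<theta> k / s powr (1 / \<alpha>)) powr \<alpha>))"
      if "k < K" "t \<ge> 0" for k t
      using \<mu> that by auto
    show "prob_space (\<nu> j)" if "j < ns" for j
      unfolding \<nu>_def using em[OF that] by (rule prob_space_distr)
    show "sets (\<nu> j) = sets borel" for j by (simp add: \<nu>_def)
    show "measure (\<nu> j) {..x} = exp (- ((x / \<tau>) powr (- 1 / \<alpha>0)))" if "j < ns" "x > 0" for j x
    proof -
      have "measure (\<nu> j) {..x} = measure M {w \<in> space M. eps j w \<le> x}"
        unfolding \<nu>_def using em[OF that(1)]
        by (subst measure_distr) (auto intro!: arg_cong[where f="measure M"])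
      then show ?thesis using m that by auto
    qed
  qed
qed

theorem mainTheorem5:
  fixes M :: "'a measure" and Z eps :: "nat \<Rightarrow> 'a \<Rightarrow> real"
    and \<alpha> \<alpha>0 \<tau> :: real and K ns :: nat
    and \<theta> :: "nat \<Rightarrow> real" and \<omega> :: "nat \<Rightarrow> nat \<Rightarrow> real"
  assumes "0 < \<alpha>" "\<alpha> < 1" "0 < \<alpha>0" "0 < \<tau>" "K \<ge> 1"
    and "\<forall>k<K. \<theta> k \<ge> 0"
    and "\<forall>k<K. \<forall>j<ns. \<omega> k j \<ge> 0"
    and "\<forall>j<ns. \<exists>k<K. \<omega> k j \<noteq> 0"
    and "model M \<alpha> \<alpha>0 \<tau> K \<theta> ns \<omega> Z eps"
  shows "(\<forall>s::real. s > 0 \<longrightarrow>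
            (\<exists>(N :: (nat \<Rightarrow> real) measure) Z' eps'.
               model N \<alpha> \<alpha>0 \<tau> K (\<lambda>k. \<theta> k / s powr (1 / \<alpha>)) ns (\<lambda>k j. \<omega> k j / s) Z' eps') \<and>
            (\<forall>(N :: 'b measure) Z' eps'.
               model N \<alpha> \<alpha>0 \<tau> K (\<lambda>k. \<theta> k / s powr (1 / \<alpha>)) ns (\<lambda>k j. \<omega> k j / s) Z' eps' \<longrightarrow>
               (\<forall>x. joint_cdf N (Xvar \<alpha> \<alpha>0 K (\<lambda>k j. \<omega> k j / s) Z' eps') ns x
                    = joint_cdf M (Xvar \<alpha> \<alpha>0 K \<omega> Z eps) ns x powr (1 / s))))
         \<and> max_inf_div ns (joint_cdf M (Xvar \<alpha> \<alpha>0 K \<omega> Z eps) ns)"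
proof (intro conjI allI impI)
  fix s :: real assume s: "s > 0"
  show "\<exists>(N :: (nat \<Rightarrow> real) measure) Z' eps'.
               model N \<alpha> \<alpha>0 \<tau> K (\<lambda>k. \<theta> k / s powr (1 / \<alpha>)) ns (\<lambda>k j. \<omega> k j / s) Z' eps'"
    by (rule exists_scaled[OF assms(1,3,4,5) s assms(6,9)])
  fix N :: "'b measure" and Z' eps' x
  assume "model N \<alpha> \<alpha>0 \<tau> K (\<lambda>k. \<theta> k / s powr (1 / \<alpha>)) ns (\<lambda>k j. \<omega> k j / s) Z' eps'"
  then show "joint_cdf N (Xvar \<alpha> \<alpha>0 K (\<lambda>k j. \<omega> k j / s) Z' eps') ns x
                    = joint_cdf M (Xvar \<alpha> \<alpha>0 K \<omega> Z eps) ns x powr (1 / s)"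
    by (rule scale_cdf[OF assms(1,3,4) s assms(6,7,8,9)])
next
  show "max_inf_div ns (joint_cdf M (Xvar \<alpha> \<alpha>0 K \<omega> Z eps) ns)"
    unfolding max_inf_div_def
  proof (intro allI impI)
    fix m :: nat assume m: "m \<ge> 1"
    then have s: "real m > 0" by simp
    obtain N :: "(nat \<Rightarrow> real) measure" and Z' eps' where
      mN: "model N \<alpha> \<alpha>0 \<tau> K (\<lambda>k. \<theta> k / real m powr (1 / \<alpha>)) ns (\<lambda>k j. \<omega> k j / real m) Z' eps'"
      using exists_scaled[OF assms(1,3,4,5) s assms(6,9)] by blast
    note mm = mN[unfolded model_def]
    have Np: "prob_space N" using mm by blast
    have Zm: "Z' k \<in> borel_measurable N" if "k \<in> {..<K}" for k using mm that by blast
    have em: "eps' j \<in> borel_measurable N" if "j < ns" for j using mm that by blast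
    show "is_joint_cdf ns (\<lambda>x. joint_cdf M (Xvar \<alpha> \<alpha>0 K \<omega> Z eps) ns x powr (1 / real m))"
      unfolding is_joint_cdf_def
    proof (intro exI conjI allI impI)
      show "prob_space N" by fact
      show "Xvar \<alpha> \<alpha>0 K (\<lambda>k j. \<omega> k j / real m) Z' eps' j \<in> borel_measurable N" if "j < ns" for j
        unfolding Xvar_def
        by (intro borel_measurable_times powr_real_measurable borel_measurable_sum em[OF that] Zm measurable_const) auto
      show "joint_cdf M (Xvar \<alpha> \<alpha>0 K \<omega> Z eps) ns x powr (1 / real m)
            = joint_cdf N (Xvar \<alpha> \<alpha>0 K (\<lambda>k j. \<omega> k j / real m) Z' eps') ns x" for x
        using scale_cdf[OF assms(1,3,4) s assms(6,7,8,9) mN] by simp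
    qed
  qed
qed

end
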